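(* Let $\mathbb{M}$ be a flow monoid with idempotent addition and let $h_1,h_2$ be flow graphs with the same node set $X$ whose edge functions are continuous and distributive. Then full path replacement of $h_1$ by $h_2$ holds if and only if path replacement of $h_1$ by $h_2$ holds.
   Context: A flow monoid is a commutative monoid $(\mathbb{M},+,0)$ such that $n\le m :\iff \exists o.\ m=n+o$ is a partial order in which every ascending chain $K$ has a least upper bound $\bigsqcup K$, and $n+\bigsqcup K=\bigsqcup(n+K)$. Addition is idempotent if $m+m=m$. A function is continuous if it commutes with least upper bounds of ascending chains, and distributive if $f(m+n)=f(m)+f(n)$ and $f(0)=0$. Sums and $\le$ on functions are pointwise. A flow graph is $h=(X,E,\mathit{in})$ with $X\subseteq\mathbb{N}$ finite, $E:X\times\mathbb{N}\to$ continuous functions $\mathbb{M}\to\mathbb{M}$, $\mathit{in}:(\mathbb{N}\setminus X)\times X\to\mathbb{M}$. A path through $h$ is $p=x_0\cdots x_nz$ with $x_i\in X$, $z\in\mathbb{N}\setminus X$; $\mathrm{Paths}_h(x\to(y,z))$ is the set of such paths with $x_0=x$, $x_n=y$, final element $z$; $E_p=E(x_n,z)\circ E(x_{n-1},x_n)\circ\cdots\circ E(x_0,x_1)$; for a set of paths $P$, $E_P=\sum_{q\in P}E_q$. $\mathrm{Out}(h_1,h_2)=\{x\in X\mid\exists z\in\mathbb{N}.\ h_1.E(x,z)\neq h_2.E(x,z)\}$. Path replacement of $h_1$ by $h_2$: for every $x\in\mathrm{Out}(h_1,h_2)$, $y\in X$, $z\in\mathbb{N}\setminus X$ and every $p\in\mathrm{Paths}_{h_1}(x\to(y,z))$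 there is $P\subseteq\mathrm{Paths}_{h_2}(x\to(y,z))$ with $E_p\le E_P$. Full path replacement is the same condition but with $x$ ranging over all of $X$. *)

theory Defs
  imports Main
begin

definition fm_le :: "'m::comm_monoid_add \<Rightarrow> 'm \<Rightarrow> bool" where
  "fm_le n m \<longleftrightarrow> (\<exists>k. m = n + k)"

text \<open>Ascending chains are read as ascending sequences k0 <= k1 <= ... (omega-chains).\<close>
definition fm_ascending :: "(nat \<Rightarrow> 'm::comm_monoid_add) \<Rightarrow> bool" where
  "fm_ascending K \<longleftrightarrow> (\<forall>i. fm_le (K i) (K (Suc i)))"

definition fm_is_lub :: "(nat \<Rightarrow> 'm::comm_monoid_add) \<Rightarrow> 'm \<Rightarrow> bool" where
  "fm_is_lub K l \<longleftrightarrow> (\<forall>i. fm_le (K i) l) \<and> (\<forall>u. (\<forall>i. fm_le (K i) u) \<longrightarrow> fm_le l u)"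

definition flow_monoid :: "'m::comm_monoid_add itself \<Rightarrow> bool" where
  "flow_monoid _ \<longleftrightarrow>
     (\<forall>n m :: 'm. fm_le n m \<and> fm_le m n \<longrightarrow> n = m) \<and>
     (\<forall>K :: nat \<Rightarrow> 'm. fm_ascending K \<longrightarrow> (\<exists>l. fm_is_lub K l)) \<and>
     (\<forall>(n::'m) K l. fm_ascending K \<and> fm_is_lub K l \<longrightarrow> fm_is_lub (\<lambda>i. n + K i) (n + l))"

definition idempotent_add :: "'m::comm_monoid_add itself \<Rightarrow> bool" where
  "idempotent_add _ \<longleftrightarrow> (\<forall>m :: 'm. m + m = m)"

definition fm_continuous :: "('m::comm_monoid_add \<Rightarrow> 'm) \<Rightarrow> bool" where
  "fm_continuous f \<longleftrightarrow> (\<forall>K l. fm_ascending K \<and> fm_is_lub K l \<longrightarrow> fm_is_lub (\<lambda>i. f (K i)) (f l))"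

definition fm_distributive :: "('m::comm_monoid_add \<Rightarrow> 'm) \<Rightarrow> bool" where
  "fm_distributive f \<longleftrightarrow> (\<forall>m n. f (m + n) = f m + f n) \<and> f 0 = 0"

definition fun_le :: "('m::comm_monoid_add \<Rightarrow> 'm) \<Rightarrow> ('m \<Rightarrow> 'm) \<Rightarrow> bool" where
  "fun_le f g \<longleftrightarrow> (\<forall>m. fm_le (f m) (g m))"

text \<open>A flow graph (X, E, in): X finite set of nodes, E x z continuous for x in X,
  in : (nat - X) x X -> M (arbitrary values outside its domain).\<close>
definition flow_graph :: "nat set \<Rightarrow> (nat \<Rightarrow> nat \<Rightarrow> 'm::comm_monoid_add \<Rightarrow> 'm) \<Rightarrow> (nat \<Rightarrow> nat \<Rightarrow> 'm) \<Rightarrow> bool" where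
  "flow_graph X E inflow \<longleftrightarrow> finite X \<and> (\<forall>x\<in>X. \<forall>z. fm_continuous (E x z))"

text \<open>A path x0 ... xn z is the list [x0, ..., xn, z].\<close>
definition paths :: "nat set \<Rightarrow> nat \<Rightarrow> nat \<Rightarrow> nat \<Rightarrow> nat list set" where
  "paths X x y z = {xs @ [z] | xs. xs \<noteq> [] \<and> set xs \<subseteq> X \<and> hd xs = x \<and> last xs = y \<and> z \<notin> X}"

fun path_fun :: "(nat \<Rightarrow> nat \<Rightarrow> 'm \<Rightarrow> 'm) \<Rightarrow> nat list \<Rightarrow> 'm \<Rightarrow> 'm" where
  "path_fun E [] = id"
| "path_fun E [x] = id"
| "path_fun E (x # y # rest) = path_fun E (y # rest) \<circ> E x y"

text \<open>E_P = sum over q in P of E_q, for a possibly infinite set P of paths through a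
  finite graph: the least upper bound of the ascending chain of (finite) partial sums over
  the paths of P of length at most k.\<close>
definition paths_fun :: "(nat \<Rightarrow> nat \<Rightarrow> 'm::comm_monoid_add \<Rightarrow> 'm) \<Rightarrow> nat list set \<Rightarrow> 'm \<Rightarrow> 'm" where
  "paths_fun E P m = (THE l. fm_is_lub (\<lambda>k. \<Sum>q\<in>{q\<in>P. length q \<le> k}. path_fun E q m) l)"

definition Out :: "nat set \<Rightarrow> (nat \<Rightarrow> nat \<Rightarrow> 'm \<Rightarrow> 'm) \<Rightarrow> (nat \<Rightarrow> nat \<Rightarrow> 'm \<Rightarrow> 'm) \<Rightarrow> nat set" where
  "Out X E1 E2 = {x\<in>X. \<exists>z. E1 x z \<noteq> E2 x z}"

definition path_replacement :: "nat set \<Rightarrow> (nat \<Rightarrow> nat \<Rightarrow> 'm::comm_monoid_add \<Rightarrow> 'm) \<Rightarrow> (nat \<Rightarrow> nat \<Rightarrow> 'm \<Rightarrow> 'm) \<Rightarrow> bool" where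
  "path_replacement X E1 E2 \<longleftrightarrow>
     (\<forall>x\<in>Out X E1 E2. \<forall>y\<in>X. \<forall>z. z \<notin> X \<longrightarrow>
        (\<forall>p\<in>paths X x y z. \<exists>P \<subseteq> paths X x y z. fun_le (path_fun E1 p) (paths_fun E2 P)))"

definition full_path_replacement :: "nat set \<Rightarrow> (nat \<Rightarrow> nat \<Rightarrow> 'm::comm_monoid_add \<Rightarrow> 'm) \<Rightarrow> (nat \<Rightarrow> nat \<Rightarrow> 'm \<Rightarrow> 'm) \<Rightarrow> bool" where
  "full_path_replacement X E1 E2 \<longleftrightarrow>
     (\<forall>x\<in>X. \<forall>y\<in>X. \<forall>z. z \<notin> X \<longrightarrow>
        (\<forall>p\<in>paths X x y z. \<exists>P \<subseteq> paths X x y z. fun_le (path_fun E1 p) (paths_fun E2 P)))"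

end

theory Submission
  imports Defs
begin

lemma paths_intro:
  assumes "xs \<noteq> []" "set xs \<subseteq> X" "hd xs = x" "last xs = y" "z \<notin> X"
  shows "xs @ [z] \<in> paths X x y z"
  unfolding paths_def using assms by blast

lemma fm_le_refl: "fm_le (a::'m::comm_monoid_add) a"
  unfolding fm_le_def by (rule exI[of _ 0]) simp

lemma fm_le_0: "fm_le 0 (a::'m::comm_monoid_add)"
  unfolding fm_le_def by simp

lemma lub_unique:
  assumes "\<forall>n m :: 'm::comm_monoid_add. fm_le n m \<and> fm_le m n \<longrightarrow> n = m"
    and "fm_is_lub K l" "fm_is_lub K (l'::'m)"
  shows "l = l'"
  using assms unfolding fm_is_lub_def by blast

lemma the_lub:
  assumes "\<forall>n m :: 'm::comm_monoid_add. fm_le n m \<and> fm_le m n \<longrightarrow> n = m"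
    and "fm_is_lub K (l::'m)"
  shows "(THE l. fm_is_lub K l) = l"
  using assms lub_unique by (metis the_equality)

lemma finite_paths_len:
  assumes "finite X" "P \<subseteq> paths X x y z"
  shows "finite {q\<in>P. length q \<le> k}"
proof -
  have "{q\<in>P. length q \<le> k} \<subseteq> {xs. set xs \<subseteq> insert z X \<and> length xs \<le> k}"
  proof
    fix q assume "q \<in> {q\<in>P. length q \<le> k}"
    then obtain xs where "q = xs @ [z]" "set xs \<subseteq> X" "length q \<le> k"
      using assms(2) unfolding paths_def by blast
    then show "q \<in> {xs. set xs \<subseteq> insert z X \<and> length xs \<le> k}" by auto
  qed
  moreover have "finite {xs. set xs \<subseteq> insert z X \<and> length xs \<le> k}"
    using assms(1) by (simp add: finite_lists_length_le)
  ultimately show ?thesis by (rule finite_subset)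
qed

lemma chain_asc:
  assumes "finite X" "P \<subseteq> paths X x y z"
  shows "fm_ascending (\<lambda>k. \<Sum>q\<in>{q\<in>P. length q \<le> k}. (f q :: 'm::comm_monoid_add))"
  unfolding fm_ascending_def fm_le_def
proof
  fix i
  have sub: "{q\<in>P. length q \<le> i} \<subseteq> {q\<in>P. length q \<le> Suc i}" by auto
  have fin: "finite {q\<in>P. length q \<le> Suc i}" using finite_paths_len[OF assms] .
  show "\<exists>k. (\<Sum>q\<in>{q\<in>P. length q \<le> Suc i}. f q) = (\<Sum>q\<in>{q\<in>P. length q \<le> i}. f q) + k"
  proof
    show "(\<Sum>q\<in>{q\<in>P. length q \<le> Suc i}. f q) = (\<Sum>q\<in>{q\<in>P. length q \<le> i}. f q) + (\<Sum>q\<in>{q\<in>P. length q \<le> Suc i} - {q\<in>P. length q \<le> i}. f q)"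
      using sum.subset_diff[OF sub fin, of f] by (simp add: add.commute)
  qed
qed

lemma shift_lub:
  assumes "fm_is_lub K (l::'m::comm_monoid_add)" "K' 0 = 0" "\<And>k. K' (Suc k) = K k"
  shows "fm_is_lub K' l"
  unfolding fm_is_lub_def
proof (intro conjI allI impI)
  fix i show "fm_le (K' i) l" using assms(1) unfolding fm_is_lub_def
    by (cases i) (simp_all add: assms(2,3) fm_le_0)
next
  fix u assume "\<forall>i. fm_le (K' i) u"
  hence "\<forall>i. fm_le (K i) u" using assms(3) by metis
  then show "fm_le l u" using assms(1) unfolding fm_is_lub_def by blast
qed

lemma paths_fun_cons:
  fixes E :: "nat \<Rightarrow> nat \<Rightarrow> 'm::comm_monoid_add \<Rightarrow> 'm"
  assumes anti: "\<forall>n m :: 'm. fm_le n m \<and> fm_le m n \<longrightarrow> n = m"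
    and ex: "\<forall>K :: nat \<Rightarrow> 'm. fm_ascending K \<longrightarrow> (\<exists>l. fm_is_lub K l)"
    and fin: "finite X" and sub: "P' \<subseteq> paths X x1 y z"
  shows "paths_fun E ((#) x ` P') m = paths_fun E P' (E x x1 m)"
proof -
  let ?K = "\<lambda>k. \<Sum>q\<in>{q\<in>P'. length q \<le> k}. path_fun E q (E x x1 m)"
  have "fm_ascending ?K" by (rule chain_asc[OF fin sub])
  then obtain l where l: "fm_is_lub ?K l" using ex by blast
  have hd: "\<And>q. q \<in> P' \<Longrightarrow> \<exists>r. q = x1 # r"
  proof -
    fix q assume "q \<in> P'"
    then obtain ws where "q = ws @ [z]" "ws \<noteq> []" "hd ws = x1"
      using sub unfolding paths_def by blast
    then have "q = x1 # (tl ws @ [z])" by (cases ws) auto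
    then show "\<exists>r. q = x1 # r" by blast
  qed
  have pf: "\<And>q. q \<in> P' \<Longrightarrow> path_fun E (x # q) m = path_fun E q (E x x1 m)"
  proof -
    fix q assume "q \<in> P'"
    then obtain r where "q = x1 # r" using hd by blast
    then show "path_fun E (x # q) m = path_fun E q (E x x1 m)" by simp
  qed
  let ?K' = "\<lambda>k. \<Sum>q\<in>{q\<in>(#) x ` P'. length q \<le> k}. path_fun E q m"
  have "fm_is_lub ?K' l"
  proof (rule shift_lub[OF l])
    have "{q\<in>(#) x ` P'. length q \<le> 0} = {}" by auto
    then show "?K' 0 = 0" by (simp only: sum.empty)
    fix k
    have "{q\<in>(#) x ` P'. length q \<le> Suc k} = (#) x ` {q\<in>P'. length q \<le> k}" by auto
    hence "?K' (Suc k) = (\<Sum>q\<in>{q\<in>P'. length q \<le> k}. path_fun E (x # q) m)"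
      by (simp add: sum.reindex)
    also have "\<dots> = ?K k" using pf by (intro sum.cong) auto
    finally show "?K' (Suc k) = ?K k" .
  qed
  hence 1: "paths_fun E ((#) x ` P') m = l" unfolding paths_fun_def by (rule the_lub[OF anti])
  have 2: "paths_fun E P' (E x x1 m) = l" unfolding paths_fun_def using l by (rule the_lub[OF anti])
  show ?thesis using 1 2 by simp
qed

lemma paths_fun_single:
  assumes anti: "\<forall>n m :: 'm::comm_monoid_add. fm_le n m \<and> fm_le m n \<longrightarrow> n = m"
  shows "paths_fun E {q} m = path_fun E q (m::'m)"
proof -
  let ?f = "path_fun E q m"
  have "fm_is_lub (\<lambda>k. \<Sum>q\<in>{q'\<in>{q}. length q' \<le> k}. path_fun E q m) ?f"
    unfolding fm_is_lub_def
  proof (intro conjI allI impI)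
    fix i show "fm_le (\<Sum>q\<in>{q'\<in>{q}. length q' \<le> i}. path_fun E q m) ?f"
    proof -
      have "{q'\<in>{q}. length q' \<le> i} = (if length q \<le> i then {q} else {})" by auto
      then show ?thesis by (simp add: fm_le_refl fm_le_0)
    qed
  next
    fix u assume "\<forall>i. fm_le (\<Sum>q\<in>{q'\<in>{q}. length q' \<le> i}. path_fun E q m) u"
    hence "fm_le (\<Sum>q\<in>{q'\<in>{q}. length q' \<le> length q}. path_fun E q m) u" by blast
    moreover have "{q'\<in>{q}. length q' \<le> length q} = {q}" by auto
    ultimately show "fm_le ?f u" by simp
  qed
  thus ?thesis unfolding paths_fun_def using the_lub[OF anti] by simp
qed

lemma back_aux:
  assumes anti: "\<forall>n m :: 'm::comm_monoid_add. fm_le n m \<and> fm_le m n \<longrightarrow> n = m"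
    and ex: "\<forall>K :: nat \<Rightarrow> 'm. fm_ascending K \<longrightarrow> (\<exists>l. fm_is_lub K l)"
    and fin: "finite X" and PR: "path_replacement X E1 (E2 :: nat \<Rightarrow> nat \<Rightarrow> 'm \<Rightarrow> 'm)"
    and z: "z \<notin> X"
  shows "\<forall>x. xs \<noteq> [] \<longrightarrow> set xs \<subseteq> X \<longrightarrow> hd xs = x \<longrightarrow> last xs = y \<longrightarrow>
      (\<exists>P \<subseteq> paths X x y z. fun_le (path_fun E1 (xs @ [z])) (paths_fun E2 P))"
proof (induction xs)
  case Nil then show ?case by simp
next
  case (Cons x0 xs)
  show ?case
  proof (intro allI impI)
    fix x assume a: "x0 # xs \<noteq> []" "set (x0 # xs) \<subseteq> X" "hd (x0 # xs) = x" "last (x0 # xs) = y"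
    have pin: "(x0 # xs) @ [z] \<in> paths X x y z" using a z unfolding paths_def by blast
    have "last (x0 # xs) \<in> set (x0 # xs)" by (rule last_in_set) simp
    hence yX: "y \<in> X" using a(2,4) by blast
    show "\<exists>P \<subseteq> paths X x y z. fun_le (path_fun E1 ((x0 # xs) @ [z])) (paths_fun E2 P)"
    proof (cases "x \<in> Out X E1 E2")
      case True
      have "\<forall>p\<in>paths X x y z. \<exists>P \<subseteq> paths X x y z. fun_le (path_fun E1 p) (paths_fun E2 P)"
      proof -
        have "\<forall>x\<in>Out X E1 E2. \<forall>y\<in>X. \<forall>z. z \<notin> X \<longrightarrow>
          (\<forall>p\<in>paths X x y z. \<exists>P \<subseteq> paths X x y z. fun_le (path_fun E1 p) (paths_fun E2 P))"
          using PR unfolding path_replacement_def by assumption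
        then show ?thesis using True yX z by blast
      qed
      then show ?thesis using pin by blast
    next
      case False
      have xX: "x \<in> X" using a by auto
      hence eq: "\<And>w. E1 x w = E2 x w" using False unfolding Out_def by auto
      show ?thesis
      proof (cases xs)
        case Nil
        hence "x0 = x" "y = x" using a by auto
        have "path_fun E1 ((x0 # xs) @ [z]) = E2 x z" using Nil \<open>x0 = x\<close> eq by simp
        moreover have "paths_fun E2 {(x0 # xs) @ [z]} = E2 x z"
          using paths_fun_single[OF anti] Nil \<open>x0 = x\<close> by fastforce
        ultimately show ?thesis using pin by (auto simp: fun_le_def fm_le_refl)
      next
        case (Cons x1 ys)
        have x0: "x0 = x" using a by simp
        obtain P' where P': "P' \<subseteq> paths X x1 y z"
          "fun_le (path_fun E1 (xs @ [z])) (paths_fun E2 P')"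
        proof -
          have "xs \<noteq> []" "set xs \<subseteq> X" "hd xs = x1" "last xs = y" using a Cons by auto
          then show ?thesis using Cons.IH that by blast
        qed
        have "(#) x ` P' \<subseteq> paths X x y z"
        proof
          fix q assume "q \<in> (#) x ` P'"
          then obtain q' where q': "q = x # q'" "q' \<in> paths X x1 y z" using P'(1) by blast
          then obtain ws where ws: "q' = ws @ [z]" "ws \<noteq> []" "set ws \<subseteq> X" "hd ws = x1" "last ws = y"
            unfolding paths_def by blast
          have "x # ws \<noteq> [] \<and> set (x # ws) \<subseteq> X \<and> hd (x # ws) = x \<and> last (x # ws) = y \<and> z \<notin> X"
            using ws xX z by simp
          moreover have "q = (x # ws) @ [z]" using q' ws by simp
          ultimately show "q \<in> paths X x y z" using paths_intro[of "x # ws" X x y z] by simp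
        qed
        moreover have "fun_le (path_fun E1 ((x0 # xs) @ [z])) (paths_fun E2 ((#) x ` P'))"
          unfolding fun_le_def
        proof
          fix m
          have "path_fun E1 ((x0 # xs) @ [z]) m = path_fun E1 (xs @ [z]) (E2 x x1 m)"
            using Cons x0 eq by simp
          moreover have "paths_fun E2 ((#) x ` P') m = paths_fun E2 P' (E2 x x1 m)"
            using paths_fun_cons[OF anti ex fin P'(1)] .
          ultimately show "fm_le (path_fun E1 ((x0 # xs) @ [z]) m) (paths_fun E2 ((#) x ` P') m)"
            using P'(2) unfolding fun_le_def by simp
        qed
        ultimately show ?thesis by blast
      qed
    qed
  qed
qed

theorem lemma8:
  fixes X :: "nat set"
    and E1 E2 :: "nat \<Rightarrow> nat \<Rightarrow> 'm::comm_monoid_add \<Rightarrow> 'm"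
    and in1 in2 :: "nat \<Rightarrow> nat \<Rightarrow> 'm"
  assumes "flow_monoid TYPE('m)"
    and "idempotent_add TYPE('m)"
    and "flow_graph X E1 in1"
    and "flow_graph X E2 in2"
    and "\<forall>x\<in>X. \<forall>z. fm_distributive (E1 x z)"
    and "\<forall>x\<in>X. \<forall>z. fm_distributive (E2 x z)"
  shows "full_path_replacement X E1 E2 \<longleftrightarrow> path_replacement X E1 E2"
proof
  assume "full_path_replacement X E1 E2"
  then show "path_replacement X E1 E2"
    unfolding full_path_replacement_def path_replacement_def Out_def by blast
next
  assume PR: "path_replacement X E1 E2"
  have anti: "\<forall>n m :: 'm. fm_le n m \<and> fm_le m n \<longrightarrow> n = m"
    and ex: "\<forall>K :: nat \<Rightarrow> 'm. fm_ascending K \<longrightarrow> (\<exists>l. fm_is_lub K l)"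
    using assms(1) unfolding flow_monoid_def by blast+
  have fin: "finite X" using assms(3) unfolding flow_graph_def by blast
  show "full_path_replacement X E1 E2"
    unfolding full_path_replacement_def
  proof (intro ballI allI impI)
    fix x y z p assume "x \<in> X" "y \<in> X" "z \<notin> X" "p \<in> paths X x y z"
    then obtain xs where "p = xs @ [z]" "xs \<noteq> []" "set xs \<subseteq> X" "hd xs = x" "last xs = y"
      unfolding paths_def by blast
    then show "\<exists>P \<subseteq> paths X x y z. fun_le (path_fun E1 p) (paths_fun E2 P)"
      using back_aux[OF anti ex fin PR \<open>z \<notin> X\<close>, of xs y] by blast
  qed
qed

end
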